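(* Let $E$ be a (real) topological vector space, let $\Omega$ be a nonempty open subset of $E$, and let $f_0,\dots,f_m:\Omega\to\mathbb{R}$ be functions. Let $\hat{x}$ be a solution of the problem $$(\mathcal{P}_1)\qquad \max f_0(x)\quad\text{subject to } x\in\Omega,\ f_i(x)\ge 0\ \text{for all } i\in\{1,\dots,m\}.$$ Assume: (a) for every $j\in\{i\in\{1,\dots,m\}: f_i(\hat{x})>0\}$, $f_j$ is lower semicontinuous at $\hat{x}$; (b) for every $i\in\{0,\dots,m\}$, $f_i$ is $D^-_M$-differentiable at $\hat{x}$. Then there exist $\lambda^0,\dots,\lambda^m\in\mathbb{R}_+$ such that: (i) $(\lambda^0,\dots,\lambda^m)\neq(0,\dots,0)$; (ii) $\lambda^i f_i(\hat{x})=0$ for all $i\in\{1,\dots,m\}$; (iii) $\sum_{i=0}^m \lambda^i D^-_M f_i(\hat{x})(u)\le 0$ for all $u\in E$. If, in addition, (c) there exists $w\in E$ such that $D^-_M f_i(\hat{x})(w)>0$ for every $i\in\{1,\dots,m\}$ with $f_i(\hat{x})=0$, then one can take $\lambda^0=1$.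
   Context: For a function $f$ defined on an open set containing $x$ and a direction $u\in E$, the lower Dini derivative is $D^-f(x)(u):=\liminf_{t\to0^+}\frac{f(x+tu)-f(x)}{t}$, with the convention $D^-f(x)(0)=0$. The modified lower Dini derivative is $D^-_Mf(x)(u):=\inf_{w\in E}\{D^-f(x)(u+w)-D^-f(x)(w)\}$. The function $f$ is called $D^-_M$-differentiable at $x$ if $D^-_Mf(x)(u)$ and $D^-f(x)(u)$ are finite for every $u\in E$. *)

theory Defs
  imports "HOL-Analysis.Analysis"
begin

class real_tvs = real_vector + topological_space +
  assumes tvs_continuous_add:
    "\<And>a b::'a. filterlim (\<lambda>p. fst p + snd p) (nhds (a + b)) (nhds a \<times>\<^sub>F nhds b)"
  assumes tvs_continuous_scaleR:
    "\<And>(c::real) (a::'a). filterlim (\<lambda>p. fst p *\<^sub>R snd p) (nhds (c *\<^sub>R a)) (nhds c \<times>\<^sub>F nhds a)"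

definition lsc_at :: "('a::topological_space \<Rightarrow> real) \<Rightarrow> 'a \<Rightarrow> bool" where
  "lsc_at f x \<longleftrightarrow> (\<forall>a. a < f x \<longrightarrow> eventually (\<lambda>y. a < f y) (nhds x))"

definition lower_dini :: "('a::real_tvs \<Rightarrow> real) \<Rightarrow> 'a \<Rightarrow> 'a \<Rightarrow> ereal" where
  "lower_dini f x u = (if u = 0 then 0
     else Liminf (at_right (0::real)) (\<lambda>t. ereal ((f (x + t *\<^sub>R u) - f x) / t)))"

definition mod_lower_dini :: "('a::real_tvs \<Rightarrow> real) \<Rightarrow> 'a \<Rightarrow> 'a \<Rightarrow> ereal" where
  "mod_lower_dini f x u = (INF w. lower_dini f x (u + w) - lower_dini f x w)"

definition DM_differentiable :: "('a::real_tvs \<Rightarrow> real) \<Rightarrow> 'a \<Rightarrow> bool" where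
  "DM_differentiable f x \<longleftrightarrow>
     (\<forall>u. mod_lower_dini f x u \<noteq> \<infinity> \<and> mod_lower_dini f x u \<noteq> -\<infinity> \<and>
          lower_dini f x u \<noteq> \<infinity> \<and> lower_dini f x u \<noteq> -\<infinity>)"

end

theory Submission
  imports Defs
begin


definition cone_set :: "'a::real_vector set \<Rightarrow> bool" where
  "cone_set K \<longleftrightarrow> (\<forall>u\<in>K. \<forall>v\<in>K. u + v \<in> K) \<and> (\<forall>u\<in>K. \<forall>s>0. s *\<^sub>R u \<in> K)"

definition superlin :: "'a::real_vector set \<Rightarrow> ('a \<Rightarrow> real) \<Rightarrow> bool" where
  "superlin K \<phi> \<longleftrightarrow> (\<forall>u\<in>K. \<forall>v\<in>K. \<phi> (u + v) \<ge> \<phi> u + \<phi> v) \<and> (\<forall>u\<in>K. \<forall>s>0. \<phi> (s *\<^sub>R u) = s * \<phi> u)"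

lemma superlin_comb:
  assumes "cone_set K" "superlin K \<phi>" "u \<in> K" "v \<in> K" "b > 0" "c > 0"
  shows "\<phi> (b *\<^sub>R u + c *\<^sub>R v) \<ge> b * \<phi> u + c * \<phi> v"
proof -
  have K: "b *\<^sub>R u \<in> K" "c *\<^sub>R v \<in> K" using assms(1,3-6) unfolding cone_set_def by blast+
  have "\<phi> (b *\<^sub>R u + c *\<^sub>R v) \<ge> \<phi> (b *\<^sub>R u) + \<phi> (c *\<^sub>R v)"
    using assms(2) K unfolding superlin_def by blast
  moreover have "\<phi> (b *\<^sub>R u) = b * \<phi> u" "\<phi> (c *\<^sub>R v) = c * \<phi> v"
    using assms(2-6) unfolding superlin_def by blast+
  ultimately show ?thesis by simp
qed

lemma two_alt:
  assumes K: "cone_set K" and p: "superlin K \<phi>" and q: "superlin K \<psi>"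
    and no: "\<forall>u\<in>K. \<not> (\<phi> u > 0 \<and> \<psi> u > 0)"
  shows "\<exists>a b. a \<ge> 0 \<and> b \<ge> 0 \<and> (a \<noteq> 0 \<or> b \<noteq> 0) \<and> (\<forall>u\<in>K. a * \<phi> u + b * \<psi> u \<le> 0)"
proof (cases "\<forall>u\<in>K. \<psi> u \<le> 0")
  case True
  then show ?thesis by (intro exI[of _ 0] exI[of _ 1]) auto
next
  case False
  then obtain v where v: "v \<in> K" "\<psi> v > 0" by force
  with no have phv: "\<phi> v \<le> 0" by force
  have key: "\<psi> u * 0 + \<psi> v * \<phi> u + (- \<psi> u) * \<phi> v \<le> 0" if u: "u \<in> K" "\<psi> u \<le> 0" "v \<in> K" "\<psi> v > 0" for u v
  proof (rule ccontr)
    define a where "a = - \<psi> u"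
    define b where "b = \<psi> v"
    define D where "D = b * \<phi> u + a * \<phi> v"
    assume "\<not> ?thesis"
    hence D: "D > 0" unfolding D_def a_def b_def by simp
    from no u have phv: "\<phi> v \<le> 0" by force
    define e where "e = D / (2 * (1 - \<phi> v))"
    have e: "e > 0" using D phv unfolding e_def by simp
    have pos: "1 - \<phi> v > 0" using phv by simp
    have "e * (1 - \<phi> v) = D / 2" unfolding e_def using pos by (simp add: field_simps)
    hence "e * \<phi> v = e - D/2" by (simp add: algebra_simps)
    hence ev: "e * \<phi> v > - D" using e D by linarith
    have a0: "a \<ge> 0" "b > 0" using u unfolding a_def b_def by auto
    define w where "w = b *\<^sub>R u + (a + e) *\<^sub>R v"
    have wK: "w \<in> K" using K u a0 e unfolding w_def cone_set_def by (meson add_nonneg_pos)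
    have "\<phi> w \<ge> b * \<phi> u + (a + e) * \<phi> v" unfolding w_def
      by (rule superlin_comb[OF K p u(1) u(3)]) (use a0 e in auto)
    hence "\<phi> w > 0" using ev D unfolding D_def by (simp add: algebra_simps)
    moreover have "\<psi> w \<ge> b * \<psi> u + (a + e) * \<psi> v" unfolding w_def
      by (rule superlin_comb[OF K q u(1) u(3)]) (use a0 e in auto)
    hence "\<psi> w \<ge> e * \<psi> v" using e a0 unfolding a_def b_def by (simp add: algebra_simps)
    hence "\<psi> w > 0" using mult_pos_pos[OF e u(4)] by linarith
    ultimately show False using no wK by blast
  qed
  define T where "T = {- \<phi> v / \<psi> v | v. v \<in> K \<and> \<psi> v > 0}"
  define t where "t = Inf T"
  have Tne: "T \<noteq> {}" using v unfolding T_def by blast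
  have Tb: "\<forall>x\<in>T. 0 \<le> x"
  proof
    fix x assume "x \<in> T"
    then obtain v' where v': "x = - \<phi> v' / \<psi> v'" "v' \<in> K" "\<psi> v' > 0" unfolding T_def by blast
    with no have "\<phi> v' \<le> 0" by force
    with v' show "0 \<le> x" by (simp add: divide_nonpos_pos)
  qed
  have t0: "t \<ge> 0" unfolding t_def using Tne Tb by (meson cInf_greatest)
  have bdd: "bdd_below T" using Tb by (meson bdd_below.I)
  have main: "\<phi> u + t * \<psi> u \<le> 0" if u: "u \<in> K" for u
    proof (cases "\<psi> u > 0")
      case True
      hence "t \<le> - \<phi> u / \<psi> u" unfolding t_def using bdd u
        by (intro cInf_lower) (auto simp: T_def)
      thus ?thesis using True by (simp add: field_simps)
    next
      case False
      hence pu: "\<psi> u \<le> 0" by simp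
      show ?thesis
      proof (cases "\<psi> u = 0")
        case True
        from key[OF u pu v(1) v(2)] True v show ?thesis by (simp add: mult_le_0_iff)
      next
        case False
        hence pu': "\<psi> u < 0" using pu by simp
        have "\<phi> u / (- \<psi> u) \<le> t" unfolding t_def
        proof (rule cInf_greatest[OF Tne])
          fix x assume "x \<in> T"
          then obtain v' where v': "x = - \<phi> v' / \<psi> v'" "v' \<in> K" "\<psi> v' > 0" unfolding T_def by blast
          from key[OF u pu v'(2) v'(3)] have "\<psi> v' * \<phi> u \<le> \<psi> u * \<phi> v'" by simp
          moreover have "x * \<psi> v' = - \<phi> v'" using v' by simp
          ultimately have "\<psi> v' * (\<phi> u + x * \<psi> u) \<le> 0"
          proof -
            assume h1: "\<psi> v' * \<phi> u \<le> \<psi> u * \<phi> v'" and h2: "x * \<psi> v' = - \<phi> v'"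
            have "\<psi> v' * (\<phi> u + x * \<psi> u) = \<psi> v' * \<phi> u + (x * \<psi> v') * \<psi> u" by (simp add: algebra_simps)
            also have "\<dots> = \<psi> v' * \<phi> u - \<psi> u * \<phi> v'" using h2 by simp
            finally show ?thesis using h1 by linarith
          qed
          hence "\<phi> u + x * \<psi> u \<le> 0" using v'(3) by (simp add: mult_le_0_iff)
          moreover have "\<phi> u / (- \<psi> u) \<le> x \<longleftrightarrow> \<phi> u \<le> x * (- \<psi> u)"
            by (rule pos_divide_le_eq) (use pu' in simp)
          ultimately show "\<phi> u / (- \<psi> u) \<le> x" by simp
        qed
        thus ?thesis using pu' by (simp add: field_simps)
      qed
    qed
  show ?thesis using t0 main by (intro exI[of _ 1] exI[of _ t]) auto
qed

lemma superlin_subset: "superlin K \<phi> \<Longrightarrow> K' \<subseteq> K \<Longrightarrow> superlin K' \<phi>"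
  unfolding superlin_def by blast

lemma superlin_sum:
  assumes "\<forall>i\<in>S. superlin K (\<phi> i)" "\<forall>i\<in>S. \<mu> i \<ge> 0"
  shows "superlin K (\<lambda>u. \<Sum>i\<in>S. \<mu> i * \<phi> i u)"
  unfolding superlin_def
proof (intro conjI ballI allI impI)
  fix u v assume uv: "u \<in> K" "v \<in> K"
  have "(\<Sum>i\<in>S. \<mu> i * \<phi> i u) + (\<Sum>i\<in>S. \<mu> i * \<phi> i v) = (\<Sum>i\<in>S. \<mu> i * (\<phi> i u + \<phi> i v))"
    by (simp add: sum.distrib algebra_simps)
  also have "\<dots> \<le> (\<Sum>i\<in>S. \<mu> i * \<phi> i (u + v))"
    using assms uv unfolding superlin_def by (intro sum_mono mult_left_mono) auto
  finally show "(\<Sum>i\<in>S. \<mu> i * \<phi> i u) + (\<Sum>i\<in>S. \<mu> i * \<phi> i v) \<le> (\<Sum>i\<in>S. \<mu> i * \<phi> i (u + v))" .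
next
  fix u and s :: real assume u: "u \<in> K" and s: "s > 0"
  have "(\<Sum>i\<in>S. \<mu> i * \<phi> i (s *\<^sub>R u)) = (\<Sum>i\<in>S. s * (\<mu> i * \<phi> i u))"
    using assms u s unfolding superlin_def by (intro sum.cong) auto
  also have "\<dots> = s * (\<Sum>i\<in>S. \<mu> i * \<phi> i u)" by (simp add: sum_distrib_left)
  finally show "(\<Sum>i\<in>S. \<mu> i * \<phi> i (s *\<^sub>R u)) = s * (\<Sum>i\<in>S. \<mu> i * \<phi> i u)" .
qed

lemma gen_alt:
  assumes "finite S" "S \<noteq> {}"
  shows "\<forall>K. cone_set K \<longrightarrow> (\<forall>i\<in>S. superlin K (\<phi> i)) \<longrightarrow> \<not> (\<exists>u\<in>K. \<forall>i\<in>S. \<phi> i u > 0) \<longrightarrow>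
    (\<exists>lam. (\<forall>i\<in>S. lam i \<ge> 0) \<and> (\<exists>i\<in>S. lam i \<noteq> 0) \<and> (\<forall>u\<in>K. (\<Sum>i\<in>S. lam i * \<phi> i u) \<le> 0))"
  using assms
proof (induction S rule: finite_ne_induct)
  case (singleton j)
  show ?case
  proof (intro allI impI)
    fix K assume "\<not> (\<exists>u\<in>K. \<forall>i\<in>{j}. \<phi> i u > 0)"
    hence "\<forall>u\<in>K. \<phi> j u \<le> 0" by auto
    thus "\<exists>lam. (\<forall>i\<in>{j}. lam i \<ge> 0) \<and> (\<exists>i\<in>{j}. lam i \<noteq> 0) \<and> (\<forall>u\<in>K. (\<Sum>i\<in>{j}. lam i * \<phi> i u) \<le> 0)"
      by (intro exI[of _ "\<lambda>_. 1"]) simp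
  qed
next
  case (insert j S)
  show ?case
  proof (intro allI impI)
    fix K assume K: "cone_set K" and sl: "\<forall>i\<in>insert j S. superlin K (\<phi> i)"
      and no: "\<not> (\<exists>u\<in>K. \<forall>i\<in>insert j S. \<phi> i u > 0)"
    define K' where "K' = {u\<in>K. \<phi> j u > 0}"
    have slj: "superlin K (\<phi> j)" using sl by auto
    have K': "cone_set K'" unfolding cone_set_def
    proof (intro conjI ballI allI impI)
      fix u v assume uv: "u \<in> K'" "v \<in> K'"
      hence uK: "u \<in> K" "v \<in> K" "\<phi> j u > 0" "\<phi> j v > 0" unfolding K'_def by auto
      hence "u + v \<in> K" using K unfolding cone_set_def by blast
      moreover have "\<phi> j (u + v) \<ge> \<phi> j u + \<phi> j v" using slj uK unfolding superlin_def by blast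
      ultimately show "u + v \<in> K'" using uK unfolding K'_def by simp
    next
      fix u and s :: real assume us: "u \<in> K'" "s > 0"
      hence uK: "u \<in> K" "\<phi> j u > 0" unfolding K'_def by auto
      hence "s *\<^sub>R u \<in> K" using K us(2) unfolding cone_set_def by blast
      moreover have "\<phi> j (s *\<^sub>R u) = s * \<phi> j u" using slj uK us(2) unfolding superlin_def by blast
      ultimately show "s *\<^sub>R u \<in> K'" using uK us(2) unfolding K'_def by simp
    qed
    have sl': "\<forall>i\<in>S. superlin K' (\<phi> i)"
    proof
      fix i assume "i \<in> S"
      hence "superlin K (\<phi> i)" using sl by simp
      thus "superlin K' (\<phi> i)" by (rule superlin_subset) (auto simp: K'_def)
    qed
    have no': "\<not> (\<exists>u\<in>K'. \<forall>i\<in>S. \<phi> i u > 0)" using no unfolding K'_def by auto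
    obtain mu where mu: "\<forall>i\<in>S. mu i \<ge> 0" "\<exists>i\<in>S. mu i \<noteq> 0" "\<forall>u\<in>K'. (\<Sum>i\<in>S. mu i * \<phi> i u) \<le> 0"
      using insert.IH[rule_format, OF K' _ no'] sl' by blast
    define psi where "psi = (\<lambda>u. \<Sum>i\<in>S. mu i * \<phi> i u)"
    have slpsi: "superlin K psi" unfolding psi_def using sl mu(1) by (intro superlin_sum) auto
    have no2: "\<forall>u\<in>K. \<not> (psi u > 0 \<and> \<phi> j u > 0)"
    proof (intro ballI notI)
      fix u assume "u \<in> K" "psi u > 0 \<and> \<phi> j u > 0"
      hence "u \<in> K'" "psi u > 0" unfolding K'_def by auto
      thus False using mu(3) unfolding psi_def by force
    qed
    obtain a b where ab: "a \<ge> 0" "b \<ge> 0" "a \<noteq> 0 \<or> b \<noteq> 0" "\<forall>u\<in>K. a * psi u + b * \<phi> j u \<le> 0"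
      using two_alt[OF K slpsi slj no2] by blast
    define lam where "lam = (\<lambda>i. if i = j then b else a * mu i)"
    have f1: "\<forall>i\<in>insert j S. lam i \<ge> 0" unfolding lam_def using ab mu by auto
    have f2: "\<exists>i\<in>insert j S. lam i \<noteq> 0"
    proof (cases "b = 0")
      case True
      with ab have "a \<noteq> 0" by auto
      from mu(2) obtain i where "i \<in> S" "mu i \<noteq> 0" by blast
      thus ?thesis using \<open>a \<noteq> 0\<close> insert.hyps unfolding lam_def by (intro bexI[of _ i]) auto
    qed (auto simp: lam_def)
    have f3: "\<forall>u\<in>K. (\<Sum>i\<in>insert j S. lam i * \<phi> i u) \<le> 0"
    proof
      fix u assume "u \<in> K"
      have "(\<Sum>i\<in>insert j S. lam i * \<phi> i u) = b * \<phi> j u + (\<Sum>i\<in>S. lam i * \<phi> i u)"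
        using insert.hyps by (simp add: lam_def)
      also have "(\<Sum>i\<in>S. lam i * \<phi> i u) = a * psi u"
        unfolding psi_def lam_def sum_distrib_left using insert.hyps
        by (intro sum.cong) auto
      finally show "(\<Sum>i\<in>insert j S. lam i * \<phi> i u) \<le> 0" using ab(4) \<open>u \<in> K\<close> by (simp add: add.commute)
    qed
    show "\<exists>lam. (\<forall>i\<in>insert j S. lam i \<ge> 0) \<and> (\<exists>i\<in>insert j S. lam i \<noteq> 0) \<and> (\<forall>u\<in>K. (\<Sum>i\<in>insert j S. lam i * \<phi> i u) \<le> 0)"
      by (rule exI[of _ lam], intro conjI f1 f2 f3)
  qed
qed



lemma lower_dini_homog:
  fixes f :: "'a::real_tvs \<Rightarrow> real"
  assumes s: "s > 0"
  shows "lower_dini f x (s *\<^sub>R u) = ereal s * lower_dini f x u"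
proof (cases "u = 0")
  case True thus ?thesis by (simp add: lower_dini_def)
next
  case False
  hence su: "s *\<^sub>R u \<noteq> 0" using s by simp
  define h where "h = (\<lambda>t. ereal ((f (x + t *\<^sub>R u) - f x) / t))"
  have eq: "ereal ((f (x + t *\<^sub>R (s *\<^sub>R u)) - f x) / t) = ereal s * h (s * t)" for t
    using s unfolding h_def by (cases "t = 0") (simp_all add: field_simps)
  have "lower_dini f x (s *\<^sub>R u) = Liminf (at_right 0) (\<lambda>t. ereal s * h (s * t))"
    unfolding lower_dini_def using su by (simp only: eq if_False)
  also have "\<dots> = ereal s * Liminf (at_right 0) (\<lambda>t. h (s * t))"
    by (rule Liminf_ereal_mult_left) (use s in auto)
  also have "Liminf (at_right 0) (\<lambda>t. h (s * t)) = Liminf (filtermap (times s) (at_right 0)) h"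
    by (rule Liminf_filtermap_eq[symmetric]) (use s in \<open>auto simp: inj_on_def\<close>)
  also have "filtermap (times s) (at_right 0) = at_right (0::real)"
    using filtermap_times_pos_at_right[OF s, of 0] by simp
  finally show ?thesis unfolding lower_dini_def h_def using False by simp
qed

definition GG :: "('a::real_tvs \<Rightarrow> real) \<Rightarrow> 'a \<Rightarrow> 'a \<Rightarrow> real" where
  "GG f x u = real_of_ereal (lower_dini f x u)"
definition DD :: "('a::real_tvs \<Rightarrow> real) \<Rightarrow> 'a \<Rightarrow> 'a \<Rightarrow> real" where
  "DD f x u = real_of_ereal (mod_lower_dini f x u)"

context
  fixes f :: "'a::real_tvs \<Rightarrow> real" and x :: 'a
  assumes dm: "DM_differentiable f x"
begin


lemma ld_eq: "lower_dini f x u = ereal (GG f x u)"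
  using dm unfolding DM_differentiable_def GG_def by (cases "lower_dini f x u") auto

lemma md_eq: "mod_lower_dini f x u = ereal (DD f x u)"
  using dm unfolding DM_differentiable_def DD_def by (cases "mod_lower_dini f x u") auto

lemma md_INF: "mod_lower_dini f x u = (INF w. ereal (GG f x (u + w) - GG f x w))"
  unfolding mod_lower_dini_def ld_eq by simp

lemma DD_le: "DD f x u \<le> GG f x (u + w) - GG f x w"
proof -
  have "ereal (DD f x u) \<le> ereal (GG f x (u + w) - GG f x w)"
    unfolding md_eq[symmetric] md_INF by (rule INF_lower) simp
  thus ?thesis by simp
qed

lemma DD_ge: assumes "\<And>w. c \<le> GG f x (u + w) - GG f x w" shows "c \<le> DD f x u"
proof -
  have "ereal c \<le> mod_lower_dini f x u"
    unfolding md_INF by (rule INF_greatest) (use assms in simp)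
  thus ?thesis unfolding md_eq by simp
qed

lemma GG0: "GG f x 0 = 0" unfolding GG_def lower_dini_def by simp

lemma GG_homog: "s > 0 \<Longrightarrow> GG f x (s *\<^sub>R u) = s * GG f x u"
  unfolding GG_def lower_dini_homog by (simp add: ld_eq)

lemma DD_le_GG: "DD f x u \<le> GG f x u"
  using DD_le[of u 0] GG0 by simp

lemma DD_superadd: "DD f x u + DD f x v \<le> DD f x (u + v)"
proof (rule DD_ge)
  fix w
  have "DD f x u \<le> GG f x (u + (v + w)) - GG f x (v + w)" by (rule DD_le)
  moreover have "DD f x v \<le> GG f x (v + w) - GG f x w" by (rule DD_le)
  ultimately show "DD f x u + DD f x v \<le> GG f x (u + v + w) - GG f x w" by (simp add: add.assoc)
qed

lemma DD_homog_ge: assumes s: "s > 0" shows "s * DD f x u \<le> DD f x (s *\<^sub>R u)"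
proof (rule DD_ge)
  fix w
  have "DD f x u \<le> GG f x (u + (1/s) *\<^sub>R w) - GG f x ((1/s) *\<^sub>R w)" by (rule DD_le)
  hence "s * DD f x u \<le> s * GG f x (u + (1/s) *\<^sub>R w) - s * GG f x ((1/s) *\<^sub>R w)" using s
    by (simp add: right_diff_distrib[symmetric])
  also have "s * GG f x (u + (1/s) *\<^sub>R w) = GG f x (s *\<^sub>R (u + (1/s) *\<^sub>R w))" using GG_homog[OF s] by simp
  also have "s *\<^sub>R (u + (1/s) *\<^sub>R w) = s *\<^sub>R u + w" using s by (simp add: scaleR_add_right)
  also have "s * GG f x ((1/s) *\<^sub>R w) = GG f x w" using GG_homog[OF s, of "(1/s) *\<^sub>R w"] s by simp
  finally show "s * DD f x u \<le> GG f x (s *\<^sub>R u + w) - GG f x w" .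
qed

lemma DD_homog: assumes s: "s > 0" shows "DD f x (s *\<^sub>R u) = s * DD f x u"
proof -
  have "(1/s) * DD f x (s *\<^sub>R u) \<le> DD f x ((1/s) *\<^sub>R (s *\<^sub>R u))" using s by (intro DD_homog_ge) simp
  hence "DD f x (s *\<^sub>R u) \<le> s * DD f x u" using s by (simp add: field_simps)
  with DD_homog_ge[OF s, of u] show ?thesis by simp
qed

end



lemma tvs_line_tendsto:
  fixes xh u :: "'a::real_tvs"
  shows "((\<lambda>t. xh + t *\<^sub>R u) \<longlongrightarrow> xh) (at_right (0::real))"
proof -
  have "filterlim (\<lambda>t. (t, u)) (nhds 0 \<times>\<^sub>F nhds u) (at_right (0::real))"
    by (intro filterlim_Pair tendsto_const) (simp add: tendsto_ident_at)
  from filterlim_compose[OF tvs_continuous_scaleR[of 0 u] this]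
  have h1: "((\<lambda>t. t *\<^sub>R u) \<longlongrightarrow> 0) (at_right (0::real))" by simp
  have "filterlim (\<lambda>t. (xh, t *\<^sub>R u)) (nhds xh \<times>\<^sub>F nhds 0) (at_right (0::real))"
    by (intro filterlim_Pair tendsto_const h1)
  from filterlim_compose[OF tvs_continuous_add[of xh 0] this]
  show ?thesis by simp
qed

theorem theorem1p1:
  fixes \<Omega> :: "'a::real_tvs set" and f :: "nat \<Rightarrow> 'a \<Rightarrow> real" and m :: nat and xh :: 'a
  assumes "open \<Omega>" and "\<Omega> \<noteq> {}"
    and sol_in: "xh \<in> \<Omega>"
    and sol_feas: "\<forall>i\<in>{1..m}. f i xh \<ge> 0"
    and sol_max: "\<forall>x\<in>\<Omega>. (\<forall>i\<in>{1..m}. f i x \<ge> 0) \<longrightarrow> f 0 x \<le> f 0 xh"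
    and a: "\<forall>j\<in>{i\<in>{1..m}. f i xh > 0}. lsc_at (f j) xh"
    and b: "\<forall>i\<in>{0..m}. DM_differentiable (f i) xh"
  shows "(\<exists>lam::nat \<Rightarrow> real. (\<forall>i\<in>{0..m}. lam i \<ge> 0)
            \<and> (\<exists>i\<in>{0..m}. lam i \<noteq> 0)
            \<and> (\<forall>i\<in>{1..m}. lam i * f i xh = 0)
            \<and> (\<forall>u. (\<Sum>i=0..m. lam i * real_of_ereal (mod_lower_dini (f i) xh u)) \<le> 0))
       \<and> ((\<exists>w. \<forall>i\<in>{1..m}. f i xh = 0 \<longrightarrow> mod_lower_dini (f i) xh w > 0) \<longrightarrow>
          (\<exists>lam::nat \<Rightarrow> real. (\<forall>i\<in>{0..m}. lam i \<ge> 0) \<and> lam 0 = 1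
            \<and> (\<forall>i\<in>{1..m}. lam i * f i xh = 0)
            \<and> (\<forall>u. (\<Sum>i=0..m. lam i * real_of_ereal (mod_lower_dini (f i) xh u)) \<le> 0)))"
proof -
  define S where "S = insert 0 {i\<in>{1..m}. f i xh = 0}"
  define P where "P = {i\<in>{1..m}. f i xh > 0}"
  have S_sub: "S \<subseteq> {0..m}" unfolding S_def by auto
  have finS: "finite S" using S_sub finite_subset by blast
  have S_ne: "S \<noteq> {}" unfolding S_def by simp
  define \<phi> where "\<phi> = (\<lambda>i u. real_of_ereal (mod_lower_dini (f i) xh u))"
  have dmS: "DM_differentiable (f i) xh" if "i \<in> S" for i using b S_sub that by auto
  have phiDD: "\<phi> i u = DD (f i) xh u" for i u unfolding \<phi>_def by (simp add: DD_def)
  have sl: "\<forall>i\<in>S. superlin UNIV (\<phi> i)"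
  proof
    fix i assume "i \<in> S"
    note d = dmS[OF this]
    show "superlin UNIV (\<phi> i)" unfolding superlin_def phiDD
      using DD_superadd[OF d] DD_homog[OF d] by simp
  qed
  have cone: "cone_set (UNIV :: 'a set)" unfolding cone_set_def by simp
  have nosol: "\<not> (\<exists>u\<in>UNIV. \<forall>i\<in>S. \<phi> i u > 0)"
  proof
    assume "\<exists>u\<in>UNIV. \<forall>i\<in>S. \<phi> i u > 0"
    then obtain u where u: "\<forall>i\<in>S. \<phi> i u > 0" by blast
    have GGpos: "GG (f i) xh u > 0" if "i \<in> S" for i
    proof -
      have "\<phi> i u > 0" using u that by blast
      thus ?thesis using DD_le_GG[OF dmS[OF that], of u] unfolding phiDD by linarith
    qed
    have "u \<noteq> 0"
    proof
      assume "u = 0"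
      with GGpos[of 0] GG0[OF dmS[of 0]] show False unfolding S_def by simp
    qed
    have ev3: "eventually (\<lambda>t. ereal ((f i (xh + t *\<^sub>R u) - f i xh) / t) > 0) (at_right 0)"
      if "i \<in> S" for i
    proof -
      have "ereal 0 < lower_dini (f i) xh u"
        using GGpos[OF that] ld_eq[OF dmS[OF that]] by simp
      hence "ereal 0 < Liminf (at_right 0) (\<lambda>t. ereal ((f i (xh + t *\<^sub>R u) - f i xh) / t))"
        unfolding lower_dini_def using \<open>u \<noteq> 0\<close> by simp
      from less_LiminfD[OF this] show ?thesis by simp
    qed
    have lim: "((\<lambda>t. xh + t *\<^sub>R u) \<longlongrightarrow> xh) (at_right (0::real))" by (rule tvs_line_tendsto)
    have ev1: "eventually (\<lambda>t. xh + t *\<^sub>R u \<in> \<Omega>) (at_right 0)"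
      by (rule topological_tendstoD[OF lim \<open>open \<Omega>\<close> sol_in])
    have ev2: "eventually (\<lambda>t. f i (xh + t *\<^sub>R u) > 0) (at_right 0)" if "i \<in> P" for i
    proof -
      have "lsc_at (f i) xh" using a that unfolding P_def by blast
      moreover have "0 < f i xh" using that unfolding P_def by auto
      ultimately have "eventually (\<lambda>y. 0 < f i y) (nhds xh)" unfolding lsc_at_def by blast
      moreover from lim have "\<forall>Q. eventually Q (nhds xh) \<longrightarrow> eventually (\<lambda>t. Q (xh + t *\<^sub>R u)) (at_right 0)"
        unfolding filterlim_iff .
      ultimately show ?thesis by blast
    qed
    have finP: "finite P" unfolding P_def by simp
    have evP: "eventually (\<lambda>t. \<forall>i\<in>P. f i (xh + t *\<^sub>R u) > 0) (at_right 0)"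
      by (rule eventually_ball_finite[OF finP]) (use ev2 in blast)
    have evS: "eventually (\<lambda>t. \<forall>i\<in>S. ereal ((f i (xh + t *\<^sub>R u) - f i xh) / t) > 0) (at_right 0)"
      by (rule eventually_ball_finite[OF finS]) (use ev3 in blast)
    have "eventually (\<lambda>t. xh + t *\<^sub>R u \<in> \<Omega> \<and> (\<forall>i\<in>P. f i (xh + t *\<^sub>R u) > 0)
        \<and> (\<forall>i\<in>S. ereal ((f i (xh + t *\<^sub>R u) - f i xh) / t) > 0) \<and> t > 0) (at_right 0)"
      by (intro eventually_conj ev1 evP evS eventually_at_right_less)
    from eventually_happens[OF this] obtain t where t: "xh + t *\<^sub>R u \<in> \<Omega>" "\<forall>i\<in>P. f i (xh + t *\<^sub>R u) > 0"
      "\<forall>i\<in>S. (f i (xh + t *\<^sub>R u) - f i xh) / t > 0" "t > 0"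
      by auto
    have inc: "f i (xh + t *\<^sub>R u) > f i xh" if "i \<in> S" for i
      using t(3,4) that by (simp add: zero_less_divide_iff)
    have "\<forall>i\<in>{1..m}. f i (xh + t *\<^sub>R u) \<ge> 0"
    proof
      fix i assume i: "i \<in> {1..m}"
      show "f i (xh + t *\<^sub>R u) \<ge> 0"
      proof (cases "f i xh = 0")
        case True
        hence "i \<in> S" using i unfolding S_def by simp
        with inc[OF this] True show ?thesis by simp
      next
        case False
        hence "i \<in> P" using i sol_feas unfolding P_def by force
        with t(2) show ?thesis by force
      qed
    qed
    with sol_max t(1) have "f 0 (xh + t *\<^sub>R u) \<le> f 0 xh" by blast
    moreover have "f 0 (xh + t *\<^sub>R u) > f 0 xh" by (rule inc) (simp add: S_def)
    ultimately show False by simp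
  qed
  obtain lam where lam: "\<forall>i\<in>S. lam i \<ge> 0" "\<exists>i\<in>S. lam i \<noteq> 0"
      "\<forall>u\<in>UNIV. (\<Sum>i\<in>S. lam i * \<phi> i u) \<le> 0"
    using gen_alt[OF finS S_ne, rule_format, OF cone _ nosol] sl by blast
  define L where "L = (\<lambda>i. if i \<in> S then lam i else 0)"
  have L1: "\<forall>i\<in>{0..m}. L i \<ge> 0" using lam(1) unfolding L_def by auto
  have L2: "\<exists>i\<in>{0..m}. L i \<noteq> 0" using lam(2) S_sub unfolding L_def by auto
  have L3: "\<forall>i\<in>{1..m}. L i * f i xh = 0" unfolding L_def S_def by auto
  have sumeq: "(\<Sum>i=0..m. L i * \<phi> i u) = (\<Sum>i\<in>S. lam i * \<phi> i u)" for u
  proof -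
    have "(\<Sum>i=0..m. L i * \<phi> i u) = (\<Sum>i=0..m. if i \<in> S then lam i * \<phi> i u else 0)"
      unfolding L_def by (intro sum.cong) auto
    also have "\<dots> = (\<Sum>i\<in>{0..m} \<inter> S. lam i * \<phi> i u)"
      by (rule sum.inter_restrict[symmetric]) simp
    also have "{0..m} \<inter> S = S" using S_sub by blast
    finally show ?thesis .
  qed
  have L4: "\<forall>u. (\<Sum>i=0..m. L i * \<phi> i u) \<le> 0" using lam(3) sumeq by simp
  have part1: "\<exists>lam::nat \<Rightarrow> real. (\<forall>i\<in>{0..m}. lam i \<ge> 0)
            \<and> (\<exists>i\<in>{0..m}. lam i \<noteq> 0)
            \<and> (\<forall>i\<in>{1..m}. lam i * f i xh = 0)
            \<and> (\<forall>u. (\<Sum>i=0..m. lam i * real_of_ereal (mod_lower_dini (f i) xh u)) \<le> 0)"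
    using L1 L2 L3 L4 unfolding \<phi>_def by (intro exI[of _ L]) simp
  have part2: "\<exists>lam::nat \<Rightarrow> real. (\<forall>i\<in>{0..m}. lam i \<ge> 0) \<and> lam 0 = 1
            \<and> (\<forall>i\<in>{1..m}. lam i * f i xh = 0)
            \<and> (\<forall>u. (\<Sum>i=0..m. lam i * real_of_ereal (mod_lower_dini (f i) xh u)) \<le> 0)"
    if w: "\<forall>i\<in>{1..m}. f i xh = 0 \<longrightarrow> mod_lower_dini (f i) xh w > 0" for w
  proof -
    have L0: "L 0 \<noteq> 0"
    proof
      assume L0: "L 0 = 0"
      from L2 obtain k where k: "k \<in> {0..m}" "L k \<noteq> 0" by blast
      have kS: "k \<in> S" "k \<noteq> 0"
      proof -
        show "k \<in> S" using k(2) unfolding L_def by (auto split: if_splits)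
        show "k \<noteq> 0" using k(2) L0 by metis
      qed
      have pos: "\<phi> i w > 0" if "i \<in> S" "i \<noteq> 0" for i
      proof -
        have "i \<in> {1..m}" "f i xh = 0" using that unfolding S_def by auto
        hence "mod_lower_dini (f i) xh w > 0" using w by blast
        thus ?thesis unfolding phiDD using md_eq[OF dmS[OF that(1)]] by simp
      qed
      have nn: "\<forall>i\<in>{0..m}. 0 \<le> L i * \<phi> i w"
      proof
        fix i assume "i \<in> {0..m}"
        show "0 \<le> L i * \<phi> i w"
        proof (cases "i \<in> S \<and> i \<noteq> 0")
          case True thus ?thesis using pos[of i] L1 \<open>i \<in> {0..m}\<close> by (simp add: less_imp_le)
        next
          case False thus ?thesis using L0 unfolding L_def by auto
        qed
      qed
      have "L k > 0" using L1 k by force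
      hence "0 < L k * \<phi> k w" using pos[OF kS] by (rule mult_pos_pos)
      hence "0 < (\<Sum>i=0..m. L i * \<phi> i w)" using nn k by (intro sum_pos2[of "{0..m}" k]) auto
      with L4 show False by (meson not_le)
    qed
    define L' where "L' = (\<lambda>i. L i / L 0)"
    have "L 0 > 0" using L0 L1 by force
    have "\<forall>i\<in>{0..m}. L' i \<ge> 0" using L1 \<open>L 0 > 0\<close> unfolding L'_def by simp
    moreover have "L' 0 = 1" using L0 unfolding L'_def by simp
    moreover have "\<forall>i\<in>{1..m}. L' i * f i xh = 0" using L3 unfolding L'_def by simp
    moreover have "\<forall>u. (\<Sum>i=0..m. L' i * \<phi> i u) \<le> 0"
    proof
      fix u
      have "(\<Sum>i=0..m. L' i * \<phi> i u) = (\<Sum>i=0..m. L i * \<phi> i u) / L 0"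
        unfolding L'_def sum_divide_distrib by (intro sum.cong) auto
      thus "(\<Sum>i=0..m. L' i * \<phi> i u) \<le> 0" using L4 \<open>L 0 > 0\<close> by (simp add: divide_nonpos_pos)
    qed
    ultimately show ?thesis unfolding \<phi>_def by (intro exI[of _ L']) simp
  qed
  show ?thesis using part1 part2 by blast
qed

end
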